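(* Let $\lambda>0$, $\lambda_{max}>0$, $p\in(0,1]$, $r(q)=\min\{p/q,1\}$ for $q\in(0,1]$, and $\mathrm{TH}(q,\tilde q)=r(q)q\exp\!\big(-\frac{\lambda r(\tilde q)\tilde q}{\lambda_{max}}\big)$ for $q,\tilde q\in[0,1]$ (with $r(0)\cdot0=0$). Define the price of anarchy $$\mathrm{PoA}=\frac{\sup_{q\in(0,1]}\lambda\, r(q)q\exp\!\big(-\frac{\lambda r(q)q}{\lambda_{max}}\big)}{\inf_{q^*\ \mathrm{SNE}}\lambda\,\mathrm{TH}(q^*,q^* )},$$ where $q^*\in[0,1]$ is a symmetric Nash equilibrium (SNE) if $\mathrm{TH}(q^*,q^* )=\max_{q\in[0,1]}\mathrm{TH}(q,q^* )$. Then $\mathrm{PoA}=1$ if $p<\frac{\lambda_{max}}{\lambda}$, and $\mathrm{PoA}=\frac{\lambda_{max}}{e\,p\,\lambda\exp(-p\lambda/\lambda_{max})}$ otherwise.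
   Context: ALOHA model with energy-harvesting transmitters (energy arrivals i.i.d. Bernoulli($p$) per slot, infinite battery) located as a homogeneous Poisson point process of density $\lambda$ in $\mathbb{R}^2$; $r(q)$ is the stationary probability of a nonempty battery, $\mathrm{TH}(q,\tilde q)$ the throughput of a transmitter using probability $q$ while all others use $\tilde q$, the numerator of PoA is the globally optimal transmission capacity and the denominator is the transmission capacity at the worst SNE; $\lambda_{max}=\frac{1}{d^2\theta^{2/\alpha}\kappa(\alpha)}$, $\kappa(\alpha)=\frac{2\pi^2}{\alpha\sin(2\pi/\alpha)}$. *)

theory Defs
  imports Complex_Main
begin

text \<open>Stationary probability of a nonempty battery: r(q) = min(p/q, 1).
  In Isabelle p/0 = 0, so r p 0 = 0 and hence r(0)*0 = 0 as required.\<close>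
definition r :: "real \<Rightarrow> real \<Rightarrow> real" where
  "r p q = min (p / q) 1"

text \<open>Throughput TH(q, qt) of a transmitter using q while all others use qt.\<close>
definition TH :: "real \<Rightarrow> real \<Rightarrow> real \<Rightarrow> real \<Rightarrow> real \<Rightarrow> real" where
  "TH p lam lmax q qt = r p q * q * exp (- (lam * r p qt * qt) / lmax)"

definition SNE :: "real \<Rightarrow> real \<Rightarrow> real \<Rightarrow> real \<Rightarrow> bool" where
  "SNE p lam lmax qs \<longleftrightarrow> qs \<in> {0..1} \<and>
     (\<forall>q\<in>{0..1}. TH p lam lmax q qs \<le> TH p lam lmax qs qs)"

definition PoA :: "real \<Rightarrow> real \<Rightarrow> real \<Rightarrow> real" where
  "PoA p lam lmax =
     Sup ((\<lambda>q. lam * r p q * q * exp (- (lam * r p q * q) / lmax)) ` {0<..1})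
     / Inf ((\<lambda>q. lam * TH p lam lmax q q) ` {q. SNE p lam lmax q})"

end

theory Submission
  imports Defs
begin

lemma rq: "p > 0 \<Longrightarrow> q > 0 \<Longrightarrow> r p q * q = min p q"
  unfolding r_def by (auto simp: min_def field_simps)

lemma r0: "r p 0 * 0 = 0" by simp

lemma yexp: "(y::real) * exp (- y) \<le> exp (-1)"
proof -
  have "y \<le> exp (y - 1)" using exp_ge_add_one_self[of "y-1"] by simp
  hence "y * exp (-y) \<le> exp (y-1) * exp (-y)" by (simp add: mult_right_mono)
  also have "\<dots> = exp (-1)" by (simp add: exp_add[symmetric])
  finally show ?thesis .
qed

lemma mono_part:
  fixes c x p :: real
  assumes "c > 0" "0 < x" "x \<le> p" "c * p \<le> 1"
  shows "x * exp (- (c*x)) \<le> p * exp (- (c*p))"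
proof -
  have p: "p > 0" using assms by linarith
  define t where "t = x / p"
  have t1: "t \<le> 1" "t > 0" using assms p by (auto simp: t_def field_simps)
  have "c*p*(t-1) \<ge> t - 1"
  proof -
    have "(1 - c*p) * (t - 1) \<le> 0" using assms t1 by (intro mult_nonneg_nonpos) auto
    thus ?thesis by (simp add: algebra_simps)
  qed
  hence "exp (t-1) \<le> exp (c*p*(t-1))" by simp
  moreover have "t \<le> exp (t-1)" using exp_ge_add_one_self[of "t-1"] by simp
  moreover have "c*p*(t-1) = c*x - c*p" using p by (simp add: t_def field_simps)
  ultimately have "t \<le> exp (c*x - c*p)" by (metis order_trans)
  hence "t * exp (- (c*x)) \<le> exp (c*x - c*p) * exp (- (c*x))"
    by (simp add: mult_right_mono)
  also have "\<dots> = exp (- (c*p))" by (simp add: exp_add[symmetric])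
  finally have "t * exp (- (c*x)) \<le> exp (- (c*p))" .
  hence "p * (t * exp (- (c*x))) \<le> p * exp (- (c*p))" using p by simp
  thus ?thesis using p by (simp add: t_def)
qed

theorem lemma2:
  fixes p lam lmax :: real
  assumes "lam > 0" and "lmax > 0" and "0 < p" and "p \<le> 1"
  shows "PoA p lam lmax =
           (if p < lmax / lam then 1
            else lmax / (exp 1 * p * lam * exp (- p * lam / lmax)))"
proof -
  note A = assms
  define V where "V = lam * p * exp (- (lam * p) / lmax)"
  have sne: "SNE p lam lmax q \<longleftrightarrow> p \<le> q \<and> q \<le> 1" for q
  proof
    assume s: "SNE p lam lmax q"
    hence q01: "q \<in> {0..1}" and le: "TH p lam lmax 1 q \<le> TH p lam lmax q q"
      unfolding SNE_def by auto
    show "p \<le> q \<and> q \<le> 1"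
    proof (rule ccontr)
      assume "\<not> ?thesis"
      hence qp: "q < p" using q01 by auto
      show False
      proof (cases "q = 0")
        case True
        have "TH p lam lmax 1 q = p" using True A rq[of p 1] by (simp add: TH_def)
        moreover have "TH p lam lmax q q = 0" using True by (simp add: TH_def)
        ultimately show False using le A by simp
      next
        case False
        hence qpos: "q > 0" using q01 by auto
        have "TH p lam lmax 1 q = p * exp (- (lam * q) / lmax)"
          using A rq[of p 1] rq[of p q] qpos qp
          by (simp add: TH_def mult.assoc)
        moreover have "TH p lam lmax q q = q * exp (- (lam * q) / lmax)"
          using A rq[of p q] qpos qp by (simp add: TH_def mult.assoc mult.commute mult.left_commute)
        ultimately show False using le qp by simp
      qed
    qed
  next
    assume q: "p \<le> q \<and> q \<le> 1"
    hence qpos: "q > 0" using A by linarith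
    have TQ: "TH p lam lmax q q = p * exp (- (lam * p) / lmax)"
      using A rq[of p q] qpos q by (simp add: TH_def mult.assoc)
    show "SNE p lam lmax q" unfolding SNE_def
    proof (intro conjI ballI)
      show "q \<in> {0..1}" using q qpos by auto
    next
      fix x :: real assume x: "x \<in> {0..1}"
      show "TH p lam lmax x q \<le> TH p lam lmax q q"
      proof (cases "x = 0")
        case True thus ?thesis using TQ A by (simp add: TH_def)
      next
        case False
        hence "x > 0" using x by auto
        hence "TH p lam lmax x q = min p x * exp (- (lam * p) / lmax)"
          using A rq[of p q] rq[of p x] qpos q by (simp add: TH_def mult.assoc)
        thus ?thesis using TQ by (simp add: mult_right_mono)
      qed
    qed
  qed
  have den: "(\<lambda>q. lam * TH p lam lmax q q) ` {q. SNE p lam lmax q} = {V}"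
  proof
    show "(\<lambda>q. lam * TH p lam lmax q q) ` {q. SNE p lam lmax q} \<subseteq> {V}"
    proof
      fix y assume "y \<in> (\<lambda>q. lam * TH p lam lmax q q) ` {q. SNE p lam lmax q}"
      then obtain q where q: "p \<le> q" "q \<le> 1" and y: "y = lam * TH p lam lmax q q"
        using sne by auto
      have "q > 0" using q A by linarith
      thus "y \<in> {V}" using y A rq[of p q] q by (simp add: TH_def V_def mult.assoc)
    qed
  next
    have "lam * TH p lam lmax p p = V"
      using A rq[of p p] by (simp add: TH_def V_def mult.assoc)
    moreover have "SNE p lam lmax p" using sne A by simp
    ultimately show "{V} \<subseteq> (\<lambda>q. lam * TH p lam lmax q q) ` {q. SNE p lam lmax q}"
      by force
  qed
  define f where "f = (\<lambda>q. lam * r p q * q * exp (- (lam * r p q * q) / lmax))"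
  have fq: "f q = lam * min p q * exp (- (lam * min p q) / lmax)" if "q > 0" for q
    using rq[of p q] that A by (simp add: f_def mult.assoc)
  define c where "c = lam / lmax"
  have c: "c > 0" using A by (simp add: c_def)
  have fq2: "f q = lam * (min p q * exp (- (c * min p q)))" if "q > 0" for q
    using fq[OF that] by (simp add: c_def mult.assoc)
  show ?thesis
  proof (cases "p < lmax / lam")
    case True
    have cp: "c * p \<le> 1" using True A by (simp add: c_def field_simps)
    have "Sup (f ` {0<..1}) = V"
    proof (rule cSup_eq_maximum)
      show "V \<in> f ` {0<..1}"
        using fq[of p] A unfolding V_def by (intro image_eqI[of _ _ p]) auto
    next
      fix y assume "y \<in> f ` {0<..1}"
      then obtain q where q: "q > 0" "q \<le> 1" and y: "y = f q" by auto
      have "min p q * exp (- (c * min p q)) \<le> p * exp (- (c*p))"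
        using mono_part[OF c, of "min p q" p] q A cp by auto
      hence "y \<le> lam * (p * exp (- (c*p)))" using y fq2[OF q(1)] A by simp
      thus "y \<le> V" unfolding V_def c_def using A by (simp add: mult.assoc)
    qed
    moreover have "V > 0" using A by (simp add: V_def)
    ultimately show ?thesis using True unfolding PoA_def den f_def[symmetric] by simp
  next
    case False
    define q0 where "q0 = lmax / lam"
    have q0: "q0 > 0" "q0 \<le> p" using False A by (auto simp: q0_def)
    have "Sup (f ` {0<..1}) = lmax * exp (-1)"
    proof (rule cSup_eq_maximum)
      have "f q0 = lmax * exp (-1)" using fq[of q0] q0 A by (simp add: q0_def)
      thus "lmax * exp (-1) \<in> f ` {0<..1}" using q0 A by (intro image_eqI[of _ _ q0]) auto
    next
      fix y assume "y \<in> f ` {0<..1}"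
      then obtain q where q: "q > 0" "q \<le> 1" and y: "y = f q" by auto
      define z where "z = lam * min p q / lmax"
      have "f q = lmax * (z * exp (- z))" using fq[OF q(1)] A by (simp add: z_def)
      also have "\<dots> \<le> lmax * exp (-1)" using yexp[of z] A by simp
      finally show "y \<le> lmax * exp (-1)" using y by simp
    qed
    hence "PoA p lam lmax = lmax * exp (-1) / V"
      unfolding PoA_def den f_def[symmetric] by simp
    also have "\<dots> = lmax / (exp 1 * p * lam * exp (- p * lam / lmax))"
      by (simp add: V_def exp_minus field_simps)
    finally show ?thesis using False by simp
  qed
qed

end
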